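(* Let $b,\beta_{vh},\beta_{hv},m,\tau_h,\tau_v,\mu_v,\tau_1,\tau_2>0$ and consider the distributed-delay system $$\dot E(t)=b\beta_{vh}mI_v(t)\Big(1-E(t)-\int_{t-\tau_1-\tau_2}^t\tfrac1{\tau_h}E(s)\,ds\Big)-\tfrac1{\tau_h}E(t),$$ $$\dot E_v(t)=b\beta_{hv}\int_{t-\tau_1}^t\tfrac1{\tau_h}E(s)\,ds\,\big(1-E_v(t)-I_v(t)\big)-\Big(\tfrac1{\tau_v}+\mu_v\Big)E_v(t),\qquad \dot I_v(t)=\tfrac1{\tau_v}E_v(t)-\mu_vI_v(t).$$ Let $$\mathcal R_0=\frac{b^2\beta_{vh}\beta_{hv}m\tau_1}{\mu_v(\mu_v\tau_v+1)}.$$ Then there exists an endemic equilibrium $(E^*,E_v^*,I_v^* )\in(0,1)^3$ (a constant stationary solution, with $E\equiv E^*$) of this system if and only if $\mathcal R_0>1$. In that case $$E^*=\frac{\mu_v\tau_h(\mathcal R_0-1)}{\mu_v\mathcal R_0(\tau_1+\tau_2+\tau_h)+b\beta_{hv}\tau_1},\quad E_v^*=\frac{\mu_v\tau_v(\mathcal R_0-1)}{\mathcal R_0(1+\mu_v\tau_v)+b\beta_{vh}m(\tau_1+\tau_2+\tau_h)},$$ $$I_v^*=\frac{\mathcal R_0-1}{\mathcal R_0(1+\mu_v\tau_v)+b\beta_{vh}m(\tau_1+\tau_2+\tau_h)}.$$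
   Context: This is the "uniform host response" reduction of a structured host–vector model: $E$ is the exposed host proportion, $E_v,I_v$ are the exposed and infected vector proportions, $\tau_1$ is the host infectious period, $\tau_2$ the recovery period, $\tau_h,\tau_v$ the intrinsic and extrinsic incubation periods, $b$ the biting rate, $\beta_{vh},\beta_{hv}$ transmission probabilities, $\mu_v$ the vector death rate and $m$ the vector-to-host ratio. Data are $E(t)$ on $[-\tau_1-\tau_2,0]$ and $E_v(0),I_v(0)$. *)

theory Defs
  imports "HOL-Analysis.Analysis"
begin

definition rhs_E :: "real \<Rightarrow> real \<Rightarrow> real \<Rightarrow> real \<Rightarrow> real \<Rightarrow> real \<Rightarrow>
    (real \<Rightarrow> real) \<Rightarrow> (real \<Rightarrow> real) \<Rightarrow> real \<Rightarrow> real" where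
  "rhs_E b bvh m tau_h tau1 tau2 E Iv t =
     b * bvh * m * Iv t * (1 - E t - integral {t - tau1 - tau2..t} (\<lambda>s. (1 / tau_h) * E s))
     - (1 / tau_h) * E t"

definition rhs_Ev :: "real \<Rightarrow> real \<Rightarrow> real \<Rightarrow> real \<Rightarrow> real \<Rightarrow> real \<Rightarrow>
    (real \<Rightarrow> real) \<Rightarrow> (real \<Rightarrow> real) \<Rightarrow> (real \<Rightarrow> real) \<Rightarrow> real \<Rightarrow> real" where
  "rhs_Ev b bhv tau_h tau_v mu_v tau1 E Ev Iv t =
     b * bhv * integral {t - tau1..t} (\<lambda>s. (1 / tau_h) * E s) * (1 - Ev t - Iv t)
     - (1 / tau_v + mu_v) * Ev t"

definition rhs_Iv :: "real \<Rightarrow> real \<Rightarrow> (real \<Rightarrow> real) \<Rightarrow> (real \<Rightarrow> real) \<Rightarrow> real \<Rightarrow> real" where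
  "rhs_Iv tau_v mu_v Ev Iv t = (1 / tau_v) * Ev t - mu_v * Iv t"

definition is_solution :: "real \<Rightarrow> real \<Rightarrow> real \<Rightarrow> real \<Rightarrow> real \<Rightarrow> real \<Rightarrow> real \<Rightarrow> real \<Rightarrow> real \<Rightarrow>
    (real \<Rightarrow> real) \<Rightarrow> (real \<Rightarrow> real) \<Rightarrow> (real \<Rightarrow> real) \<Rightarrow> bool" where
  "is_solution b bvh bhv m tau_h tau_v mu_v tau1 tau2 E Ev Iv \<longleftrightarrow>
     (\<forall>t. (E has_real_derivative rhs_E b bvh m tau_h tau1 tau2 E Iv t) (at t) \<and>
          (Ev has_real_derivative rhs_Ev b bhv tau_h tau_v mu_v tau1 E Ev Iv t) (at t) \<and>
          (Iv has_real_derivative rhs_Iv tau_v mu_v Ev Iv t) (at t))"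

definition is_equilibrium :: "real \<Rightarrow> real \<Rightarrow> real \<Rightarrow> real \<Rightarrow> real \<Rightarrow> real \<Rightarrow> real \<Rightarrow> real \<Rightarrow> real \<Rightarrow>
    real \<Rightarrow> real \<Rightarrow> real \<Rightarrow> bool" where
  "is_equilibrium b bvh bhv m tau_h tau_v mu_v tau1 tau2 Es Evs Ivs \<longleftrightarrow>
     is_solution b bvh bhv m tau_h tau_v mu_v tau1 tau2 (\<lambda>_. Es) (\<lambda>_. Evs) (\<lambda>_. Ivs)"

definition R0 :: "real \<Rightarrow> real \<Rightarrow> real \<Rightarrow> real \<Rightarrow> real \<Rightarrow> real \<Rightarrow> real \<Rightarrow> real" where
  "R0 b bvh bhv m tau_v mu_v tau1 = (b^2 * bvh * bhv * m * tau1) / (mu_v * (mu_v * tau_v + 1))"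

end

theory Submission
  imports Defs
begin

lemma equil_iff:
  assumes "tau1 > 0" "tau2 > 0"
  shows "is_equilibrium b bvh bhv m tau_h tau_v mu_v tau1 tau2 Es Evs Ivs \<longleftrightarrow>
     (b * bvh * m * Ivs * (1 - Es - (tau1 + tau2) * ((1 / tau_h) * Es)) - (1 / tau_h) * Es = 0 \<and>
      b * bhv * (tau1 * ((1 / tau_h) * Es)) * (1 - Evs - Ivs) - (1 / tau_v + mu_v) * Evs = 0 \<and>
      (1 / tau_v) * Evs - mu_v * Ivs = 0)"
proof -
  have c: "\<And>D. ((\<lambda>_. c) has_real_derivative D) (at t) \<longleftrightarrow> D = 0" for c :: real and t
    using DERIV_unique DERIV_const by metis
  have i1: "integral {t - tau1 - tau2..t} (\<lambda>s. (1 / tau_h) * Es) = (tau1 + tau2) * ((1 / tau_h) * Es)" for t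
    using assms by simp
  have i2: "integral {t - tau1..t} (\<lambda>s. (1 / tau_h) * Es) = tau1 * ((1 / tau_h) * Es)" for t
    using assms by simp
  show ?thesis
    unfolding is_equilibrium_def is_solution_def rhs_E_def rhs_Ev_def rhs_Iv_def c i1 i2
    by simp
qed

lemma scale_eq:
  fixes c P Q R :: real
  assumes "c \<noteq> 0" "c * P = Q - R"
  shows "P = 0 \<longleftrightarrow> Q = R"
  using assms by auto

lemma core:
  fixes b bvh bhv m tau_h tau_v mu_v tau1 tau2 R E V I :: real
  assumes pos: "b > 0" "bvh > 0" "bhv > 0" "m > 0" "tau_h > 0" "tau_v > 0" "mu_v > 0"
    "tau1 > 0" "tau2 > 0"
  and Rdef: "R * (mu_v * (1 + mu_v * tau_v)) = (b * bvh * m) * (b * bhv * tau1)"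
  and e1: "(b * bvh * m) * I * (tau_h - (tau1 + tau2 + tau_h) * E) = E"
  and e2: "b * bhv * tau1 * E * (1 - (1 + mu_v * tau_v) * I) = (1 + mu_v * tau_v) * mu_v * tau_h * I"
  and I: "I > 0"
  shows "R * (1 - (1 + mu_v * tau_v) * I) = 1 + (b * bvh * m) * I * (tau1 + tau2 + tau_h)"
proof -
  define A where "A = b * bvh * m"
  define k where "k = 1 + mu_v * tau_v"
  define T where "T = tau1 + tau2 + tau_h"
  have mt: "mu_v * tau_v > 0" using pos by simp
  have Ap: "A > 0" "k > 0" "T > 0" using pos mt unfolding A_def k_def T_def by (simp, linarith, linarith)
  have E: "E * (1 + A * I * T) = A * I * tau_h" using e1 unfolding A_def T_def by (simp add: algebra_simps)
  have e2': "b * bhv * tau1 * E * (1 - k * I) = k * mu_v * tau_h * I" using e2 unfolding k_def .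
  have "(A * (b * bhv * tau1)) * (1 - k * I) * (I * tau_h) = b * bhv * tau1 * (A * I * tau_h) * (1 - k * I)"
    by (simp only: ac_simps)
  also have "\<dots> = b * bhv * tau1 * (E * (1 + A * I * T)) * (1 - k * I)"
    by (simp only: E)
  also have "\<dots> = (b * bhv * tau1 * E * (1 - k * I)) * (1 + A * I * T)"
    by (simp only: ac_simps)
  also have "\<dots> = (k * mu_v * tau_h * I) * (1 + A * I * T)"
    by (simp only: e2')
  also have "\<dots> = (k * mu_v) * (1 + A * I * T) * (I * tau_h)"
    by (simp only: ac_simps)
  finally have "(A * (b * bhv * tau1)) * (1 - k * I) * (I * tau_h) = (k * mu_v) * (1 + A * I * T) * (I * tau_h)" .
  hence "(A * (b * bhv * tau1)) * (1 - k * I) = (k * mu_v) * (1 + A * I * T)"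
    using I pos by simp
  hence "R * (mu_v * k) * (1 - k * I) = (k * mu_v) * (1 + A * I * T)"
    using Rdef unfolding A_def k_def by simp
  hence "R * (1 - k * I) * (k * mu_v) = (1 + A * I * T) * (k * mu_v)"
    by (simp only: ac_simps)
  hence "R * (1 - k * I) = (1 + A * I * T)" using Ap pos by simp
  thus ?thesis unfolding A_def k_def T_def by (simp add: algebra_simps)
qed

theorem proposition4:
  fixes b bvh bhv m tau_h tau_v mu_v tau1 tau2 :: real
  assumes "b > 0" "bvh > 0" "bhv > 0" "m > 0" "tau_h > 0" "tau_v > 0" "mu_v > 0"
    "tau1 > 0" "tau2 > 0"
  defines "R \<equiv> R0 b bvh bhv m tau_v mu_v tau1"
  shows "((\<exists>Es Evs Ivs. Es \<in> {0<..<1} \<and> Evs \<in> {0<..<1} \<and> Ivs \<in> {0<..<1} \<and>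
            is_equilibrium b bvh bhv m tau_h tau_v mu_v tau1 tau2 Es Evs Ivs) \<longleftrightarrow> R > 1) \<and>
         (\<forall>Es Evs Ivs. Es \<in> {0<..<1} \<longrightarrow> Evs \<in> {0<..<1} \<longrightarrow> Ivs \<in> {0<..<1} \<longrightarrow>
            is_equilibrium b bvh bhv m tau_h tau_v mu_v tau1 tau2 Es Evs Ivs \<longrightarrow>
            Es = mu_v * tau_h * (R - 1) / (mu_v * R * (tau1 + tau2 + tau_h) + b * bhv * tau1) \<and>
            Evs = mu_v * tau_v * (R - 1) / (R * (1 + mu_v * tau_v) + b * bvh * m * (tau1 + tau2 + tau_h)) \<and>
            Ivs = (R - 1) / (R * (1 + mu_v * tau_v) + b * bvh * m * (tau1 + tau2 + tau_h)))"
proof -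
  define A where "A = b * bvh * m"
  define k where "k = 1 + mu_v * tau_v"
  define T where "T = tau1 + tau2 + tau_h"
  have mt: "mu_v * tau_v > 0" using assms by simp
  have Ap: "A > 0" "k > 0" "T > 0" "T > tau_h" "k > 1" using assms mt unfolding A_def k_def T_def by (simp, linarith, linarith, linarith, linarith)
  have k1: "mu_v * tau_v + 1 > 0" "1 + mu_v * tau_v > 0" using mt by linarith+
  have Rpos: "R > 0" using assms k1 unfolding R_def R0_def by simp
  have Rdef: "R * (mu_v * (1 + mu_v * tau_v)) = (b * bvh * m) * (b * bhv * tau1)"
  proof -
    have nz: "mu_v * (mu_v * tau_v + 1) \<noteq> 0" using k1 assms by simp
    have r: "R * (mu_v * (mu_v * tau_v + 1)) = b^2 * bvh * bhv * m * tau1"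
      unfolding R_def R0_def using nz by simp
    have x: "(b * bvh * m) * (b * bhv * tau1) = b^2 * bvh * bhv * m * tau1"
      by (simp add: power2_eq_square algebra_simps)
    have y: "mu_v * (1 + mu_v * tau_v) = mu_v * (mu_v * tau_v + 1)" by simp
    show ?thesis unfolding x y r ..
  qed
  have eqv: "is_equilibrium b bvh bhv m tau_h tau_v mu_v tau1 tau2 Es Evs Ivs \<longleftrightarrow>
      (A * Ivs * (tau_h - T * Es) = Es \<and>
       b * bhv * tau1 * Es * (1 - Evs - Ivs) = k * mu_v * tau_h * Ivs \<and>
       Evs = mu_v * tau_v * Ivs)" for Es Evs Ivs
  proof -
    have a1: "b * bvh * m * Ivs * (1 - Es - (tau1 + tau2) * ((1 / tau_h) * Es)) - (1 / tau_h) * Es = 0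
       \<longleftrightarrow> A * Ivs * (tau_h - T * Es) = Es"
      apply (rule scale_eq[of tau_h])
      using assms unfolding A_def T_def by (simp_all add: field_simps)
    have a3: "(1 / tau_v) * Evs - mu_v * Ivs = 0 \<longleftrightarrow> Evs = mu_v * tau_v * Ivs"
      apply (rule scale_eq[of tau_v])
      using assms by (simp_all add: field_simps)
    have a2: "Evs = mu_v * tau_v * Ivs \<Longrightarrow>
       (b * bhv * (tau1 * ((1 / tau_h) * Es)) * (1 - Evs - Ivs) - (1 / tau_v + mu_v) * Evs = 0
       \<longleftrightarrow> b * bhv * tau1 * Es * (1 - Evs - Ivs) = k * mu_v * tau_h * Ivs)"
      apply (rule scale_eq[of tau_h])
      using assms unfolding k_def by (simp_all add: field_simps)
    show ?thesis using equil_iff[OF assms(8,9)] a1 a2 a3 by blast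
  qed
  have fwd: "R > 1 \<and> Es = mu_v * tau_h * (R - 1) / (mu_v * R * (tau1 + tau2 + tau_h) + b * bhv * tau1) \<and>
            Evs = mu_v * tau_v * (R - 1) / (R * (1 + mu_v * tau_v) + b * bvh * m * (tau1 + tau2 + tau_h)) \<and>
            Ivs = (R - 1) / (R * (1 + mu_v * tau_v) + b * bvh * m * (tau1 + tau2 + tau_h))"
    if h: "Es \<in> {0<..<1}" "Evs \<in> {0<..<1}" "Ivs \<in> {0<..<1}"
       "is_equilibrium b bvh bhv m tau_h tau_v mu_v tau1 tau2 Es Evs Ivs" for Es Evs Ivs
  proof -
    have e1: "A * Ivs * (tau_h - T * Es) = Es" and e2: "b * bhv * tau1 * Es * (1 - Evs - Ivs) = k * mu_v * tau_h * Ivs"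
      and e3: "Evs = mu_v * tau_v * Ivs" using h(4) eqv by auto
    have s1: "1 - Evs - Ivs = 1 - k * Ivs" unfolding e3 k_def by (simp add: algebra_simps)
    have e2': "b * bhv * tau1 * Es * (1 - k * Ivs) = k * mu_v * tau_h * Ivs"
      using e2 unfolding s1 .
    have I: "Ivs > 0" using h by simp
    have key: "R * (1 - k * Ivs) = 1 + A * Ivs * T"
      using core[OF assms(1-9) Rdef _ _ I, of Es] e1 e2' unfolding A_def k_def T_def by simp
    have pp: "A * Ivs * T > 0" using Ap I by simp
    have q: "1 - k * Ivs > 0"
    proof (rule ccontr)
      assume "\<not> ?thesis" hence "R * (1 - k * Ivs) \<le> 0" using Rpos by (simp add: mult_nonneg_nonpos)
      thus False using key pp by linarith
    qed
    have "1 - k * Ivs \<le> 1" using Ap I by simp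
    hence "R * (1 - k * Ivs) \<le> R" using Rpos by (simp add: mult_left_le)
    hence R1: "R > 1" using key pp by linarith
    have den: "R * k + A * T > 0" using mult_pos_pos[OF Rpos Ap(2)] mult_pos_pos[OF Ap(1) Ap(3)] by linarith
    have Iv: "Ivs = (R - 1) / (R * k + A * T)"
      using key den by (simp add: field_simps)
    have E: "Es * (1 + A * Ivs * T) = A * Ivs * tau_h" using e1 by (simp add: algebra_simps)
    have d2: "mu_v * R * T + b * bhv * tau1 > 0"
      using mult_pos_pos[OF mult_pos_pos[OF assms(7) Rpos] Ap(3)] mult_pos_pos[OF mult_pos_pos[OF assms(1) assms(3)] assms(8)] by linarith
    have Rk: "R * (mu_v * k) = A * (b * bhv * tau1)" using Rdef unfolding A_def k_def by simp
    have kat: "k + A * T > 0" using Ap mult_pos_pos[OF Ap(1) Ap(3)] by linarith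
    have "Es = A * Ivs * tau_h / (1 + A * Ivs * T)" using E pp by (simp add: field_simps)
    also have "\<dots> = mu_v * tau_h * (R - 1) / (mu_v * R * T + b * bhv * tau1)"
    proof -
      have h: "1 + A * Ivs * T = R * (k + A * T) / (R * k + A * T)"
        using den unfolding Iv by (simp add: field_simps)
      have "A * Ivs * tau_h / (1 + A * Ivs * T) = A * ((R - 1) / (R * k + A * T)) * tau_h / (R * (k + A * T) / (R * k + A * T))"
        by (subst h, subst Iv, rule refl)
      also have "\<dots> = A * tau_h * (R - 1) / (R * (k + A * T))"
      proof -
        have n1: "R * k + A * (R * T) \<noteq> 0" "R * k + A * T \<noteq> 0"
          using mult_pos_pos[OF Rpos kat] den by (simp_all add: algebra_simps)
        have "A * ((R - 1) / (R * k + A * T)) * tau_h = (A * tau_h * (R - 1)) / (R * k + A * T)" by simp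
        hence "A * ((R - 1) / (R * k + A * T)) * tau_h / (R * (k + A * T) / (R * k + A * T))
          = (A * tau_h * (R - 1)) / (R * k + A * T) / (R * (k + A * T) / (R * k + A * T))" by simp
        also have "\<dots> = A * tau_h * (R - 1) / (R * (k + A * T))"
          using n1(2) by (simp add: divide_divide_eq_left)
        finally show ?thesis .
      qed
      finally have "A * Ivs * tau_h / (1 + A * Ivs * T) = A * tau_h * (R - 1) / (R * (k + A * T))" .
      also have "\<dots> = mu_v * tau_h * (R - 1) / (mu_v * R * T + b * bhv * tau1)"
      proof -
        have key2: "A * (mu_v * R * T + b * bhv * tau1) = mu_v * (R * (k + A * T))"
          using Rk by (simp add: algebra_simps)
        have nz1: "R * (k + A * T) \<noteq> 0" using Rpos kat by simp
        have nz2: "mu_v * R * T + b * bhv * tau1 \<noteq> 0" using d2 by simp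
        have "A * tau_h * (R - 1) * (mu_v * R * T + b * bhv * tau1) = tau_h * (R - 1) * (A * (mu_v * R * T + b * bhv * tau1))"
          by (simp only: ac_simps)
        also have "\<dots> = tau_h * (R - 1) * (mu_v * (R * (k + A * T)))" by (simp only: key2)
        also have "\<dots> = mu_v * tau_h * (R - 1) * (R * (k + A * T))" by (simp only: ac_simps)
        finally show ?thesis by (simp only: frac_eq_eq[OF nz1 nz2])
      qed
      finally show ?thesis .
    qed
    finally show ?thesis using R1 Iv e3 unfolding A_def k_def T_def by simp
  qed
  have bwd: "\<exists>Es Evs Ivs. Es \<in> {0<..<1} \<and> Evs \<in> {0<..<1} \<and> Ivs \<in> {0<..<1} \<and>
            is_equilibrium b bvh bhv m tau_h tau_v mu_v tau1 tau2 Es Evs Ivs" if R1: "R > 1"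
  proof -
    define I where "I = (R - 1) / (R * k + A * T)"
    define V where "V = mu_v * tau_v * I"
    define E where "E = A * I * tau_h / (1 + A * I * T)"
    have den: "R * k + A * T > 0" using mult_pos_pos[OF Rpos Ap(2)] mult_pos_pos[OF Ap(1) Ap(3)] by linarith
    have Ip: "I > 0" using R1 den unfolding I_def by simp
    have key: "R * (1 - k * I) = 1 + A * I * T"
      using den unfolding I_def by (simp add: field_simps)
    have pp: "A * I * T > 0" using Ap Ip by simp
    have mt: "mu_v * tau_v > 0" using assms by simp
    have Rk1: "R * k = R + R * (mu_v * tau_v)" unfolding k_def by (simp add: algebra_simps)
    have RR: "R * (mu_v * tau_v) > 0" using Rpos mt by simp
    have AT: "A * T > 0" using Ap by simp
    have I1: "I < 1" unfolding I_def
      by (rule divide_less_eq_1_pos[THEN iffD2, OF den]) (use Rk1 RR AT in linarith)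
    have V1: "V < 1"
    proof -
      have "mu_v * tau_v * (R - 1) < R * k + A * T"
        using Rk1 RR AT Rpos mt by (simp add: algebra_simps)
      hence "mu_v * tau_v * (R - 1) / (R * k + A * T) < 1"
        by (rule divide_less_eq_1_pos[THEN iffD2, OF den])
      thus ?thesis unfolding V_def I_def by simp
    qed
    have Vp: "V > 0" unfolding V_def using Ip assms by simp
    have d: "1 + A * I * T > 0" using pp by linarith
    have Ep: "E > 0" unfolding E_def by (rule divide_pos_pos[OF _ d]) (simp add: Ip Ap assms)
    have AI: "A * I > 0" using Ap Ip by simp
    have E1: "E < 1" unfolding E_def
    proof (rule divide_less_eq_1_pos[THEN iffD2, OF d])
      have "A * I * tau_h < A * I * T" using mult_strict_left_mono[OF Ap(4) AI] .
      thus "A * I * tau_h < 1 + A * I * T" by linarith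
    qed
    have Rk: "R * (mu_v * k) = A * (b * bhv * tau1)" using Rdef unfolding A_def k_def by simp
    have E2: "E * (1 + A * I * T) = A * I * tau_h" unfolding E_def using d by simp
    have e1: "A * I * (tau_h - T * E) = E"
    proof -
      have "A * I * (tau_h - T * E) = A * I * tau_h - A * I * T * E" by (simp add: algebra_simps)
      moreover have "E * (1 + A * I * T) = E + A * I * T * E" by (simp add: algebra_simps)
      ultimately show ?thesis using E2 by linarith
    qed
    have e2: "b * bhv * tau1 * E * (1 - k * I) = k * mu_v * tau_h * I"
    proof -
      have "b * bhv * tau1 * E * (1 - k * I) * (1 + A * I * T)
          = b * bhv * tau1 * (E * (1 + A * I * T)) * (1 - k * I)" by (simp only: ac_simps)
      also have "\<dots> = b * bhv * tau1 * (A * I * tau_h) * (1 - k * I)" by (simp only: E2)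
      also have "\<dots> = (A * (b * bhv * tau1)) * (1 - k * I) * I * tau_h" by (simp only: ac_simps)
      also have "\<dots> = R * (mu_v * k) * (1 - k * I) * I * tau_h" by (simp only: Rk)
      also have "\<dots> = k * mu_v * tau_h * I * (R * (1 - k * I))" by (simp only: ac_simps)
      also have "\<dots> = k * mu_v * tau_h * I * (1 + A * I * T)" by (simp only: key)
      finally show ?thesis using d by simp
    qed
    have s1: "1 - V - I = 1 - k * I" unfolding V_def k_def by (simp add: algebra_simps)
    have "is_equilibrium b bvh bhv m tau_h tau_v mu_v tau1 tau2 E V I"
      unfolding eqv s1 using e1 e2 V_def by blast
    thus ?thesis using Ip I1 Vp V1 Ep E1 by auto
  qed
  show ?thesis using fwd bwd by blast
qed

end
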